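(* For any $\rho>0$ and $\Delta>0$, the following randomized procedure $\texttt{DPStats}_L$ satisfies $\rho$-zCDP (with respect to datasets of $n$ rows $(x_i,y_i)\in\mathbb{R}^2$, $n$ public). Input: data $(x_1,y_1),\dots,(x_n,y_n)$, an integer $n\ge2$, positive integers $r,q$ with $r<n$, and $\rho,\Delta>0$. Set $\rho'=\rho/5$ and compute, with independent Gaussian noises: $\tilde{\bar x}=\frac1n\sum_i[x_i]_{-\Delta}^{\Delta}+\mathcal{N}(0,\frac{2\Delta^2}{\rho' n^2})$; $\tilde{\bar y}=\frac1n\sum_i[y_i]_{-\Delta}^{\Delta}+\mathcal{N}(0,\frac{2\Delta^2}{\rho' n^2})$; $\widetilde{\overline{x^2}}=\frac1n\sum_i[x_i^2]_0^{\Delta^2}+\mathcal{N}(0,\frac{\Delta^4}{2\rho' n^2})$; $\widetilde{\overline{xy}}=\frac1n\sum_i[x_iy_i]_{-\Delta^2}^{\Delta^2}+\mathcal{N}(0,\frac{2\Delta^4}{\rho' n^2})$; $\widetilde{\overline{y^2}}=\frac1n\sum_i[y_i^2]_0^{\Delta^2}+\mathcal{N}(0,\frac{\Delta^4}{2\rho' n^2})$; $\tilde\beta_1=\frac{\widetilde{\overline{xy}}-\tilde{\bar x}\tilde{\bar y}}{\widetilde{\overline{x^2}}-\tilde{\bar x}^2}$, $\tilde\beta_2=\frac{\tilde{\bar y}\widetilde{\overline{x^2}}-\tilde{\bar x}\widetilde{\overline{xy}}}{\widetilde{\overline{x^2}}-\tilde{\bar x}^2}$; $\widetilde{S_0^2}=\frac{n\widetilde{\overline{y^2}}-2\tilde\beta_2n\tilde{\bar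 y}+n\tilde\beta_2^2}{n-r}$, $\widetilde{S^2}=\frac{n\widetilde{\overline{y^2}}-2\tilde\beta_2n\tilde{\bar y}-2\tilde\beta_1n\widetilde{\overline{xy}}+n\tilde\beta_2^2+2\tilde\beta_1\tilde\beta_2n\tilde{\bar x}+\tilde\beta_1^2n\widetilde{\overline{xy}}}{n-r}$. Output $(\perp,\perp)$ unless $\min\big(\widetilde{S_0^2},\,(n\widetilde{\overline{x^2}}-n\tilde{\bar x}^2)/(n-1)\big)>0$, in which case output $\tilde\theta_0=(\tilde\beta_2,\tilde{\bar x},\widetilde{\overline{x^2}},\widetilde{S_0^2},n)$ and $\tilde\theta_1=(\tilde\beta_1,\tilde{\bar x},\widetilde{\overline{x^2}},\widetilde{S^2},n)$.
   Context: $[z]_a^b$ denotes $z$ clipped to $[a,b]$. Two datasets of $n$ rows are neighboring if they differ in exactly one row. A randomized mechanism $\mathcal{M}$ satisfies $\rho$-zCDP (zero-concentrated differential privacy) if for all neighboring datasets $\mathbf{x},\mathbf{x}'$ and all $\alpha\in(1,\infty)$, $D_\alpha(\mathcal{M}(\mathbf{x})\|\mathcal{M}(\mathbf{x}'))\le\rho\alpha$, where $D_\alpha$ is the Rényi divergence of order $\alpha$. *)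

theory Defs
  imports "HOL-Probability.Probability"
begin

definition clip :: "real \<Rightarrow> real \<Rightarrow> real \<Rightarrow> real" where
  "clip a b z = max a (min b z)"

definition renyi_div :: "real \<Rightarrow> 'a measure \<Rightarrow> 'a measure \<Rightarrow> ereal" where
  "renyi_div \<alpha> P Q =
     (if absolutely_continuous Q P then
        (let I = (\<integral>\<^sup>+ x. ennreal ((enn2real (RN_deriv Q P x)) powr \<alpha>) \<partial>Q)
         in if I = \<infinity> then \<infinity> else ereal (ln (enn2real I) / (\<alpha> - 1)))
      else \<infinity>)"

text \<open>Output of DPStats_L: either bottom (None) or the pair (theta0, theta1).\<close>
type_synonym theta = "real \<times> real \<times> real \<times> real \<times> nat"
type_synonym dps_out = "(theta \<times> theta) option"

definition out_space :: "dps_out measure" where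
  "out_space = sigma UNIV {A. Some -` A \<in> sets borel}"

definition gauss :: "real \<Rightarrow> real measure" where
  "gauss v = density lborel (normal_density 0 (sqrt v))"

definition dps_post :: "nat \<Rightarrow> nat \<Rightarrow> real \<Rightarrow> real \<Rightarrow> real \<Rightarrow> real \<Rightarrow> real \<Rightarrow> dps_out" where
  "dps_post n r xb yb x2 xy y2 =
     (let b1 = (xy - xb * yb) / (x2 - xb\<^sup>2);
          b2 = (yb * x2 - xb * xy) / (x2 - xb\<^sup>2);
          S0 = (real n * y2 - 2 * b2 * real n * yb + real n * b2\<^sup>2) / (real n - real r);
          S  = (real n * y2 - 2 * b2 * real n * yb - 2 * b1 * real n * xy + real n * b2\<^sup>2
                + 2 * b1 * b2 * real n * xb + b1\<^sup>2 * real n * xy) / (real n - real r)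
      in if min S0 ((real n * x2 - real n * xb\<^sup>2) / (real n - 1)) > 0
         then Some ((b2, xb, x2, S0, n), (b1, xb, x2, S, n))
         else None)"

text \<open>The mechanism DPStats_L on a dataset of pairs (x_i, y_i), i < n = length D.
  q is an input of the procedure which is not used in the computation.\<close>
definition dpstats_L :: "nat \<Rightarrow> nat \<Rightarrow> nat \<Rightarrow> real \<Rightarrow> real \<Rightarrow> (real \<times> real) list \<Rightarrow> dps_out measure" where
  "dpstats_L n r q \<rho> \<Delta> D =
     (let \<rho>' = \<rho> / 5;
          sx  = (\<Sum>i<n. clip (-\<Delta>) \<Delta> (fst (D ! i))) / real n;
          sy  = (\<Sum>i<n. clip (-\<Delta>) \<Delta> (snd (D ! i))) / real n;
          sx2 = (\<Sum>i<n. clip 0 (\<Delta>\<^sup>2) ((fst (D ! i))\<^sup>2)) / real n;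
          sxy = (\<Sum>i<n. clip (-(\<Delta>\<^sup>2)) (\<Delta>\<^sup>2) (fst (D ! i) * snd (D ! i))) / real n;
          sy2 = (\<Sum>i<n. clip 0 (\<Delta>\<^sup>2) ((snd (D ! i))\<^sup>2)) / real n;
          noise = gauss (2 * \<Delta>\<^sup>2 / (\<rho>' * (real n)\<^sup>2)) \<Otimes>\<^sub>M
                  (gauss (2 * \<Delta>\<^sup>2 / (\<rho>' * (real n)\<^sup>2)) \<Otimes>\<^sub>M
                  (gauss (\<Delta>^4 / (2 * \<rho>' * (real n)\<^sup>2)) \<Otimes>\<^sub>M
                  (gauss (2 * \<Delta>^4 / (\<rho>' * (real n)\<^sup>2)) \<Otimes>\<^sub>M
                   gauss (\<Delta>^4 / (2 * \<rho>' * (real n)\<^sup>2)))))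
      in distr noise out_space
           (\<lambda>(z1, z2, z3, z4, z5). dps_post n r (sx + z1) (sy + z2) (sx2 + z3) (sxy + z4) (sy2 + z5)))"

definition neighbouring :: "nat \<Rightarrow> 'a list \<Rightarrow> 'a list \<Rightarrow> bool" where
  "neighbouring n D D' \<longleftrightarrow> length D = n \<and> length D' = n \<and> card {i. i < n \<and> D ! i \<noteq> D' ! i} = 1"

definition zCDP :: "nat \<Rightarrow> real \<Rightarrow> ('a list \<Rightarrow> 'b measure) \<Rightarrow> bool" where
  "zCDP n \<rho> M \<longleftrightarrow> (\<forall>D D'. neighbouring n D D' \<longrightarrow>
      (\<forall>\<alpha>>1. renyi_div \<alpha> (M D) (M D') \<le> ereal (\<rho> * \<alpha>)))"

end

theory Submission
  imports Defs
begin

definition gR :: "real \<Rightarrow> 'a measure \<Rightarrow> 'a measure \<Rightarrow> ('a \<Rightarrow> real) \<Rightarrow> ennreal \<Rightarrow> bool" where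
"gR \<alpha> P Q g K \<longleftrightarrow> prob_space Q \<and> prob_space P \<and> g \<in> borel_measurable Q \<and> (\<forall>x. 0 \<le> g x)
   \<and> P = density Q (\<lambda>x. ennreal (g x)) \<and> (\<integral>\<^sup>+x. ennreal (g x powr \<alpha>) \<partial>Q) = K"

lemma gR_pair:
  assumes A: "gR \<alpha> P1 Q1 g1 K1" and B: "gR \<alpha> P2 Q2 g2 K2"
  shows "gR \<alpha> (P1 \<Otimes>\<^sub>M P2) (Q1 \<Otimes>\<^sub>M Q2) (\<lambda>(x,y). g1 x * g2 y) (K1 * K2)"
proof -
  from A have q1: "prob_space Q1" and p1: "prob_space P1" and m1[measurable]: "g1 \<in> borel_measurable Q1"
    and n1: "\<And>x. 0 \<le> g1 x" and d1: "P1 = density Q1 (\<lambda>x. ennreal (g1 x))"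
    and k1: "(\<integral>\<^sup>+x. ennreal (g1 x powr \<alpha>) \<partial>Q1) = K1" by (auto simp: gR_def)
  from B have q2: "prob_space Q2" and p2: "prob_space P2" and m2[measurable]: "g2 \<in> borel_measurable Q2"
    and n2: "\<And>x. 0 \<le> g2 x" and d2: "P2 = density Q2 (\<lambda>x. ennreal (g2 x))"
    and k2: "(\<integral>\<^sup>+x. ennreal (g2 x powr \<alpha>) \<partial>Q2) = K2" by (auto simp: gR_def)
  interpret Q2: prob_space Q2 by (rule q2)
  interpret Q1: prob_space Q1 by (rule q1)
  have "P1 \<Otimes>\<^sub>M P2 = density (Q1 \<Otimes>\<^sub>M Q2) (\<lambda>(x,y). ennreal (g1 x) * ennreal (g2 y))"
    unfolding d1 d2
    apply (rule pair_measure_density)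
    using p2 d2 prob_space_imp_sigma_finite Q2.sigma_finite_measure_axioms by auto
  also have "\<dots> = density (Q1 \<Otimes>\<^sub>M Q2) (\<lambda>z. ennreal ((\<lambda>(x,y). g1 x * g2 y) z))"
    by (intro density_cong) (auto simp: ennreal_mult n1 n2)
  finally have d: "P1 \<Otimes>\<^sub>M P2 = density (Q1 \<Otimes>\<^sub>M Q2) (\<lambda>z. ennreal ((\<lambda>(x,y). g1 x * g2 y) z))" .
  have "(\<integral>\<^sup>+z. ennreal ((\<lambda>(x,y). g1 x * g2 y) z powr \<alpha>) \<partial>(Q1 \<Otimes>\<^sub>M Q2))
      = (\<integral>\<^sup>+z. ennreal (g1 (fst z) powr \<alpha>) * ennreal (g2 (snd z) powr \<alpha>) \<partial>(Q1 \<Otimes>\<^sub>M Q2))"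
    by (intro nn_integral_cong) (auto simp: powr_mult n1 n2 ennreal_mult split: prod.splits)
  also have "\<dots> = (\<integral>\<^sup>+x. \<integral>\<^sup>+y. ennreal (g1 x powr \<alpha>) * ennreal (g2 y powr \<alpha>) \<partial>Q2 \<partial>Q1)"
    by (subst Q2.nn_integral_fst[symmetric]) auto
  also have "\<dots> = (\<integral>\<^sup>+x. ennreal (g1 x powr \<alpha>) * K2 \<partial>Q1)"
    by (intro nn_integral_cong) (simp add: nn_integral_cmult k2)
  also have "\<dots> = K1 * K2" by (simp add: nn_integral_multc k1)
  finally have k: "(\<integral>\<^sup>+z. ennreal ((\<lambda>(x,y). g1 x * g2 y) z powr \<alpha>) \<partial>(Q1 \<Otimes>\<^sub>M Q2)) = K1 * K2" .
  have pp: "prob_space (P1 \<Otimes>\<^sub>M P2)" using p1 p2 by (rule prob_space_pair)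
  have mm: "(\<lambda>(x,y). g1 x * g2 y) \<in> borel_measurable (Q1 \<Otimes>\<^sub>M Q2)" by measurable
  show ?thesis unfolding gR_def
    by (intro conjI prob_space_pair q1 q2 pp mm d k allI) (auto simp: n1 n2)
qed

lemma gauss_pointwise:
  assumes v: "v > 0" and a: "\<alpha> > 1"
  shows "normal_density s' (sqrt v) x * (normal_density s (sqrt v) x / normal_density s' (sqrt v) x) powr \<alpha>
     = exp (\<alpha> * (\<alpha> - 1) * (s - s')\<^sup>2 / (2 * v)) * normal_density (\<alpha> * s + (1 - \<alpha>) * s') (sqrt v) x"
proof -
  define K where "K = 1 / sqrt (2 * pi * v)"
  have K: "K > 0" using v by (simp add: K_def)
  have sq: "(sqrt v)\<^sup>2 = v" using v by simp
  have nd: "\<And>\<mu>. normal_density \<mu> (sqrt v) x = K * exp (-(x - \<mu>)\<^sup>2 / (2 * v))"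
    unfolding normal_density_def K_def sq ..
  have r: "normal_density s (sqrt v) x / normal_density s' (sqrt v) x
       = exp (-(x - s)\<^sup>2 / (2 * v) - (-(x - s')\<^sup>2 / (2 * v)))"
  proof -
    have "K * exp (-(x - s)\<^sup>2 / (2 * v)) / (K * exp (-(x - s')\<^sup>2 / (2 * v)))
       = exp (-(x - s)\<^sup>2 / (2 * v) - (-(x - s')\<^sup>2 / (2 * v)))"
      using K by (subst exp_diff) simp
    then show ?thesis unfolding nd .
  qed
  have e: "-(x - s')\<^sup>2 / (2 * v) + \<alpha> * (-(x - s)\<^sup>2 / (2 * v) - (-(x - s')\<^sup>2 / (2 * v)))
      = \<alpha> * (\<alpha> - 1) * (s - s')\<^sup>2 / (2 * v) + -(x - (\<alpha> * s + (1 - \<alpha>) * s'))\<^sup>2 / (2 * v)"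
    using v by (simp add: field_simps power2_eq_square)
  have p: "(normal_density s (sqrt v) x / normal_density s' (sqrt v) x) powr \<alpha>
      = exp (\<alpha> * (-(x - s)\<^sup>2 / (2 * v) - (-(x - s')\<^sup>2 / (2 * v))))"
    unfolding r powr_def by simp
  show ?thesis
    unfolding p unfolding nd
    by (simp only: mult.assoc exp_add[symmetric] e) (simp add: exp_add[symmetric])
qed

lemma gR_gauss:
  assumes v: "v > 0" and a: "\<alpha> > 1"
  shows "gR \<alpha> (density lborel (normal_density s (sqrt v))) (density lborel (normal_density s' (sqrt v)))
           (\<lambda>x. normal_density s (sqrt v) x / normal_density s' (sqrt v) x)
           (ennreal (exp (\<alpha> * (\<alpha> - 1) * (s - s')\<^sup>2 / (2 * v))))"
proof -
  have sv: "sqrt v > 0" using v by simp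
  have pos: "\<And>m x. normal_density m (sqrt v) x > 0" using sv by (rule normal_density_pos)
  have meas[measurable]: "\<And>m. normal_density m (sqrt v) \<in> borel_measurable borel"
    unfolding normal_density_def by measurable
  have m1: "(\<lambda>x. normal_density s (sqrt v) x / normal_density s' (sqrt v) x)
      \<in> borel_measurable (density lborel (normal_density s' (sqrt v)))" by simp
  have d: "density lborel (normal_density s (sqrt v)) = density (density lborel (normal_density s' (sqrt v)))
     (\<lambda>x. ennreal (normal_density s (sqrt v) x / normal_density s' (sqrt v) x))"
    apply (subst density_density_eq)
      apply simp apply simp
    apply (rule density_cong) apply simp apply simp
    apply (rule AE_I2)
    subgoal for x using pos[of s' x] pos[of s x] by (simp add: ennreal_mult[symmetric] less_imp_le)
    done
  have "(\<integral>\<^sup>+x. ennreal ((normal_density s (sqrt v) x / normal_density s' (sqrt v) x) powr \<alpha>)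
        \<partial>density lborel (normal_density s' (sqrt v)))
      = (\<integral>\<^sup>+x. ennreal (normal_density s' (sqrt v) x) * ennreal ((normal_density s (sqrt v) x / normal_density s' (sqrt v) x) powr \<alpha>) \<partial>lborel)"
    by (subst nn_integral_density) auto
  also have "\<dots> = (\<integral>\<^sup>+x. ennreal (exp (\<alpha> * (\<alpha> - 1) * (s - s')\<^sup>2 / (2 * v))) * ennreal (normal_density (\<alpha> * s + (1 - \<alpha>) * s') (sqrt v) x) \<partial>lborel)"
    apply (intro nn_integral_cong)
    using pos gauss_pointwise[OF v a] by (simp add: ennreal_mult[symmetric] less_imp_le)
  also have "\<dots> = ennreal (exp (\<alpha> * (\<alpha> - 1) * (s - s')\<^sup>2 / (2 * v))) * (\<integral>\<^sup>+x. ennreal (normal_density (\<alpha> * s + (1 - \<alpha>) * s') (sqrt v) x) \<partial>lborel)"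
    by (rule nn_integral_cmult) simp
  also have "(\<integral>\<^sup>+x. ennreal (normal_density (\<alpha> * s + (1 - \<alpha>) * s') (sqrt v) x) \<partial>lborel) = 1"
    by (subst nn_integral_eq_integral) (auto simp: integrable_normal_density[OF sv] integral_normal_density[OF sv])
  finally have k: "(\<integral>\<^sup>+x. ennreal ((normal_density s (sqrt v) x / normal_density s' (sqrt v) x) powr \<alpha>)
        \<partial>density lborel (normal_density s' (sqrt v))) = ennreal (exp (\<alpha> * (\<alpha> - 1) * (s - s')\<^sup>2 / (2 * v)))" by simp
  show ?thesis unfolding gR_def
    apply (intro conjI allI prob_space_normal_density sv m1 d k)
    using pos by (auto intro: less_imp_le)
qed

lemma sup_trunc:
  assumes t: "0 \<le> t" and a: "\<alpha> > 0"
  shows "(SUP k::nat. ennreal (min t (real k) powr \<alpha>)) = ennreal (t powr \<alpha>)"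
proof (rule antisym)
  show "(SUP k::nat. ennreal (min t (real k) powr \<alpha>)) \<le> ennreal (t powr \<alpha>)"
    by (rule SUP_least, rule ennreal_leI, rule powr_mono2) (use t a in auto)
next
  obtain k :: nat where "t \<le> real k" using real_arch_simple by blast
  then have "min t (real k) = t" by simp
  then show "ennreal (t powr \<alpha>) \<le> (SUP k::nat. ennreal (min t (real k) powr \<alpha>))"
    by (intro SUP_upper2[of k]) auto
qed

lemma young_point:
  fixes w b :: real
  assumes "0 \<le> w" "0 \<le> b" "\<alpha> > 1"
  shows "b * w powr (\<alpha> - 1) \<le> ((\<alpha> - 1) / \<alpha>) * w powr \<alpha> + (1 / \<alpha>) * b powr \<alpha>"
proof -
  have "w powr (\<alpha> - 1) * b \<le> (w powr (\<alpha> - 1)) powr (\<alpha> / (\<alpha> - 1)) / (\<alpha> / (\<alpha> - 1)) + b powr \<alpha> / \<alpha>"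
    by (rule Youngs_inequality) (use assms in \<open>auto simp: field_simps\<close>)
  also have "(w powr (\<alpha> - 1)) powr (\<alpha> / (\<alpha> - 1)) = w powr \<alpha>"
    using assms by (simp add: powr_powr)
  finally show ?thesis by (simp add: field_simps)
qed

lemma dpi:
  assumes G: "gR \<alpha> P0 Q0 g (ennreal (exp t))" and a: "\<alpha> > 1"
    and F[measurable]: "F \<in> measurable Q0 N"
  shows "renyi_div \<alpha> (distr P0 N F) (distr Q0 N F) \<le> ereal (t / (\<alpha> - 1))"
proof -
  from G have q0: "prob_space Q0" and p0: "prob_space P0" and gm[measurable]: "g \<in> borel_measurable Q0"
    and gn: "\<And>x. 0 \<le> g x" and d0: "P0 = density Q0 (\<lambda>x. ennreal (g x))"
    and J: "(\<integral>\<^sup>+x. ennreal (g x powr \<alpha>) \<partial>Q0) = ennreal (exp t)" by (auto simp: gR_def)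
  define P where "P = distr P0 N F"
  define Q where "Q = distr Q0 N F"
  have FP[measurable]: "F \<in> measurable P0 N" using F d0 by simp
  interpret Q0: prob_space Q0 by (rule q0)
  interpret P0: prob_space P0 by (rule p0)
  interpret Q: prob_space Q unfolding Q_def by (rule Q0.prob_space_distr) simp
  interpret P: prob_space P unfolding P_def by (rule P0.prob_space_distr) simp
  have sPQ: "sets P = sets Q" by (simp add: P_def Q_def)
  have ac: "absolutely_continuous Q P"
    unfolding absolutely_continuous_def
  proof
    fix A assume "A \<in> null_sets Q"
    then have A1: "F -` A \<inter> space Q0 \<in> null_sets Q0" and A2: "A \<in> sets N"
      unfolding Q_def using null_sets_distr_iff[OF F] by auto
    have "F -` A \<inter> space P0 \<in> null_sets P0"
      unfolding d0 using A1 AE_not_in[OF A1]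
      by (subst null_sets_density_iff) (auto elim!: AE_mp)
    then show "A \<in> null_sets P" unfolding P_def using null_sets_distr_iff[OF FP] A2 by auto
  qed
  define h where "h = RN_deriv Q P"
  have hm[measurable]: "h \<in> borel_measurable Q" unfolding h_def by (rule borel_measurable_RN_deriv)
  have dP: "density Q h = P" unfolding h_def by (rule Q.density_RN_deriv[OF ac sPQ])
  define I where "I = (\<integral>\<^sup>+ x. ennreal ((enn2real (h x)) powr \<alpha>) \<partial>Q)"
  define u where "u k x = min (enn2real (h x)) (real k)" for k :: nat and x
  have um: "u k \<in> borel_measurable Q" for k unfolding u_def by measurable
  have sQ: "sets Q = sets N" by (simp add: Q_def)
  have umN[measurable]: "u k \<in> borel_measurable N" for k
    using um[of k] by (subst measurable_cong_sets[OF sQ[symmetric] refl])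
  have ukF[measurable]: "(\<lambda>z. u k (F z)) \<in> borel_measurable Q0" for k
    using measurable_comp[OF F umN] by (simp add: comp_def)
  have un: "0 \<le> u k x" for k x unfolding u_def by simp
  have Ik: "(\<integral>\<^sup>+ x. ennreal (u k x powr \<alpha>) \<partial>Q) \<le> ennreal (exp t)" for k
  proof -
    define Ik where "Ik = (\<integral>\<^sup>+ x. ennreal (u k x powr \<alpha>) \<partial>Q)"
    have Ikfin: "Ik \<le> ennreal (real k powr \<alpha>)"
    proof -
      have "Ik \<le> (\<integral>\<^sup>+ x. ennreal (real k powr \<alpha>) \<partial>Q)"
        unfolding Ik_def
        by (intro nn_integral_mono ennreal_leI powr_mono2) (use a un in \<open>auto simp: u_def\<close>)
      also have "\<dots> = ennreal (real k powr \<alpha>)" by (simp add: Q.emeasure_space_1)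
      finally show ?thesis .
    qed
    have "Ik \<le> (\<integral>\<^sup>+ x. ennreal (u k x powr (\<alpha> - 1)) * h x \<partial>Q)"
      unfolding Ik_def
    proof (intro nn_integral_mono)
      fix x
      show "ennreal (u k x powr \<alpha>) \<le> ennreal (u k x powr (\<alpha> - 1)) * h x"
      proof (cases "h x = \<infinity>")
        case True
        then show ?thesis using a by (cases "u k x = 0") (auto simp: u_def ennreal_mult_top)
      next
        case False
        then have hx: "h x = ennreal (enn2real (h x))" by (simp add: ennreal_enn2real_if)
        have "u k x powr \<alpha> = u k x powr (\<alpha> - 1) * u k x"
          using un[of k x] a by (cases "u k x = 0") (auto simp: powr_diff)
        also have "\<dots> \<le> u k x powr (\<alpha> - 1) * enn2real (h x)"
          by (intro mult_left_mono) (auto simp: u_def)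
        finally show ?thesis
          by (subst hx) (auto simp: ennreal_mult[symmetric] intro!: ennreal_leI)
      qed
    qed
    also have "\<dots> = (\<integral>\<^sup>+ x. ennreal (u k x powr (\<alpha> - 1)) \<partial>P)"
      unfolding dP[symmetric] using um[of k] by (subst nn_integral_density) (auto simp: mult.commute)
    also have "\<dots> = (\<integral>\<^sup>+ z. ennreal (u k (F z) powr (\<alpha> - 1)) \<partial>P0)"
      unfolding P_def
      by (subst nn_integral_distr) auto
    also have "\<dots> = (\<integral>\<^sup>+ z. ennreal (g z) * ennreal (u k (F z) powr (\<alpha> - 1)) \<partial>Q0)"
      unfolding d0 by (rule nn_integral_density; measurable)
    also have "\<dots> \<le> (\<integral>\<^sup>+ z. ennreal ((\<alpha> - 1) / \<alpha>) * ennreal (u k (F z) powr \<alpha>)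
                          + ennreal (1 / \<alpha>) * ennreal (g z powr \<alpha>) \<partial>Q0)"
    proof (intro nn_integral_mono)
      fix z
      have "g z * u k (F z) powr (\<alpha> - 1) \<le> ((\<alpha> - 1) / \<alpha>) * u k (F z) powr \<alpha> + (1 / \<alpha>) * g z powr \<alpha>"
        by (rule young_point) (use un gn a in auto)
      then show "ennreal (g z) * ennreal (u k (F z) powr (\<alpha> - 1)) \<le> ennreal ((\<alpha> - 1) / \<alpha>) * ennreal (u k (F z) powr \<alpha>)
                          + ennreal (1 / \<alpha>) * ennreal (g z powr \<alpha>)"
      proof -
        have nn: "0 \<le> (\<alpha> - 1) / \<alpha>" "0 \<le> 1 / \<alpha>" "0 \<le> u k (F z) powr \<alpha>" "0 \<le> g z powr \<alpha>"
          "0 \<le> u k (F z) powr (\<alpha> - 1)" using a by auto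
        have "ennreal (g z * u k (F z) powr (\<alpha> - 1)) \<le> ennreal (((\<alpha> - 1) / \<alpha>) * u k (F z) powr \<alpha> + (1 / \<alpha>) * g z powr \<alpha>)"
          by (rule ennreal_leI) fact
        then show ?thesis using nn gn[of z]
          by (simp only: ennreal_mult ennreal_plus mult_nonneg_nonneg)
      qed
    qed
    also have "\<dots> = ennreal ((\<alpha> - 1) / \<alpha>) * (\<integral>\<^sup>+ z. ennreal (u k (F z) powr \<alpha>) \<partial>Q0)
                     + ennreal (1 / \<alpha>) * ennreal (exp t)"
      apply (subst nn_integral_add, measurable, measurable)
      apply (subst nn_integral_cmult, measurable)+
      apply (simp add: J)
      done
    also have "(\<integral>\<^sup>+ z. ennreal (u k (F z) powr \<alpha>) \<partial>Q0) = Ik"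
      unfolding Ik_def Q_def by (subst nn_integral_distr) (auto simp: Q_def)
    finally have ineq: "Ik \<le> ennreal ((\<alpha> - 1) / \<alpha>) * Ik + ennreal (1 / \<alpha>) * ennreal (exp t)" .
    obtain i where i: "Ik = ennreal i" "0 \<le> i" using Ikfin
      by (cases Ik) (auto simp: top_unique)
    have "ennreal i \<le> ennreal ((\<alpha> - 1) / \<alpha> * i + 1 / \<alpha> * exp t)"
    proof -
      have "ennreal ((\<alpha> - 1) / \<alpha> * i + 1 / \<alpha> * exp t) = ennreal ((\<alpha> - 1) / \<alpha>) * Ik + ennreal (1 / \<alpha>) * ennreal (exp t)"
      proof -
        have c: "0 \<le> (\<alpha> - 1) / \<alpha>" "0 \<le> 1 / \<alpha>" using a by auto
        have "ennreal ((\<alpha> - 1) / \<alpha> * i + 1 / \<alpha> * exp t) = ennreal ((\<alpha> - 1) / \<alpha> * i) + ennreal (1 / \<alpha> * exp t)"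
          by (rule ennreal_plus) (use c i a in auto)
        also have "ennreal ((\<alpha> - 1) / \<alpha> * i) = ennreal ((\<alpha> - 1) / \<alpha>) * ennreal i"
          by (rule ennreal_mult) (use c i in auto)
        also have "ennreal (1 / \<alpha> * exp t) = ennreal (1 / \<alpha>) * ennreal (exp t)"
          by (rule ennreal_mult) (use c i in auto)
        finally show ?thesis using i by simp
      qed
      then show ?thesis using ineq i by simp
    qed
    then have "i \<le> (\<alpha> - 1) / \<alpha> * i + 1 / \<alpha> * exp t"
      using a i by (subst (asm) ennreal_le_iff) (auto intro!: add_nonneg_nonneg)
    then have "i \<le> exp t" using a by (simp add: field_simps)
    then show ?thesis using i Ik_def by simp
  qed
  have hI: "I \<le> ennreal (exp t)"
  proof -
    note um[measurable]
    have "I = (\<integral>\<^sup>+ x. (SUP k. ennreal (u k x powr \<alpha>)) \<partial>Q)"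
      unfolding I_def u_def using a by (intro nn_integral_cong) (simp add: sup_trunc)
    also have "\<dots> = (SUP k. \<integral>\<^sup>+ x. ennreal (u k x powr \<alpha>) \<partial>Q)"
    proof (rule nn_integral_monotone_convergence_SUP)
      show "incseq (\<lambda>k x. ennreal (u k x powr \<alpha>))"
        unfolding incseq_def le_fun_def using a
        by (auto simp: u_def intro!: ennreal_leI powr_mono2)
    qed measurable
    also have "\<dots> \<le> ennreal (exp t)" by (rule SUP_least) (rule Ik)
    finally show ?thesis .
  qed
  have I0: "I \<noteq> 0"
  proof
    assume "I = 0"
    then have "AE x in Q. ennreal (enn2real (h x) powr \<alpha>) = 0"
      unfolding I_def by (subst (asm) nn_integral_0_iff_AE) measurable
    moreover have "AE x in Q. h x \<noteq> \<infinity>"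
      unfolding h_def by (rule Q.RN_deriv_finite[OF P.sigma_finite_measure_axioms ac sPQ])
    ultimately have "AE x in Q. h x = 0"
      by eventually_elim (auto simp: enn2real_eq_0_iff)
    then have "density Q h = density Q (\<lambda>_. 0)" by (intro density_cong) auto
    then have "P = density Q (\<lambda>_. 0)" using dP by simp
    then have "emeasure P (space P) = 0" by (simp add: emeasure_density)
    with P.emeasure_space_1 show False by simp
  qed
  have Ifin: "I \<noteq> \<infinity>" using hI by (auto simp: top_unique)
  have e1: "enn2real I \<le> exp t" using hI enn2real_mono[OF hI] by simp
  have e2: "0 < enn2real I" using I0 Ifin by (simp add: enn2real_positive_iff less_top zero_less_iff_neq_zero)
  have "ln (enn2real I) \<le> t" using ln_le_cancel_iff[of "enn2real I" "exp t"] e1 e2 by simp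
  then have "ln (enn2real I) / (\<alpha> - 1) \<le> t / (\<alpha> - 1)" using a by (intro divide_right_mono) auto
  then show ?thesis
    unfolding renyi_div_def Let_def P_def[symmetric] Q_def[symmetric] h_def[symmetric]
    unfolding I_def[symmetric] using ac Ifin by simp
qed

lemma post_meas:
  "(\<lambda>(a,b,c,d,e). dps_post n r a b c d e) \<in> measurable (borel \<Otimes>\<^sub>M (borel \<Otimes>\<^sub>M (borel \<Otimes>\<^sub>M (borel \<Otimes>\<^sub>M borel)))) out_space"
  unfolding out_space_def
proof (rule measurable_measure_of)
  fix A :: "dps_out set" assume "A \<in> {A. Some -` A \<in> sets borel}"
  then have B[measurable]: "Some -` A \<in> sets borel" by simp
  let ?M = "borel \<Otimes>\<^sub>M (borel \<Otimes>\<^sub>M (borel \<Otimes>\<^sub>M (borel \<Otimes>\<^sub>M borel))) :: (real \<times> real \<times> real \<times> real \<times> real) measure"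
  define b1 where "b1 = (\<lambda>(xb::real,yb::real,x2::real,xy::real,y2::real). (xy - xb * yb) / (x2 - xb\<^sup>2))"
  define b2 where "b2 = (\<lambda>(xb::real,yb::real,x2::real,xy::real,y2::real). (yb * x2 - xb * xy) / (x2 - xb\<^sup>2))"
  define S0 where "S0 = (\<lambda>(xb::real,yb::real,x2::real,xy::real,y2::real). (real n * y2 - 2 * b2 (xb,yb,x2,xy,y2) * real n * yb + real n * (b2 (xb,yb,x2,xy,y2))\<^sup>2) / (real n - real r))"
  define S where "S = (\<lambda>(xb::real,yb::real,x2::real,xy::real,y2::real). (real n * y2 - 2 * b2 (xb,yb,x2,xy,y2) * real n * yb - 2 * b1 (xb,yb,x2,xy,y2) * real n * xy + real n * (b2 (xb,yb,x2,xy,y2))\<^sup>2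
                + 2 * b1 (xb,yb,x2,xy,y2) * b2 (xb,yb,x2,xy,y2) * real n * xb + (b1 (xb,yb,x2,xy,y2))\<^sup>2 * real n * xy) / (real n - real r))"
  define cnd where "cnd = (\<lambda>(xb::real,yb::real,x2::real,xy::real,y2::real). min (S0 (xb,yb,x2,xy,y2)) ((real n * x2 - real n * xb\<^sup>2) / (real n - 1)) > 0)"
  define Gm where "Gm = (\<lambda>(xb::real,yb::real,x2::real,xy::real,y2::real). ((b2 (xb,yb,x2,xy,y2), xb, x2, S0 (xb,yb,x2,xy,y2), n), (b1 (xb,yb,x2,xy,y2), xb, x2, S (xb,yb,x2,xy,y2), n)))"
  have [measurable]: "b1 \<in> borel_measurable ?M" "b2 \<in> borel_measurable ?M" unfolding b1_def b2_def by measurable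
  have [measurable]: "S0 \<in> borel_measurable ?M" "S \<in> borel_measurable ?M" unfolding S0_def S_def by measurable
  have [measurable]: "Measurable.pred ?M cnd" unfolding cnd_def by measurable
  have [measurable]: "Gm \<in> borel_measurable ?M" unfolding Gm_def borel_prod[symmetric] by measurable
  have eq: "(\<lambda>(a,b,c,d,e). dps_post n r a b c d e) = (\<lambda>z. if cnd z then Some (Gm z) else None)"
    by (auto simp: fun_eq_iff dps_post_def Let_def b1_def b2_def S0_def S_def cnd_def Gm_def)
  have "(\<lambda>(a,b,c,d,e). dps_post n r a b c d e) -` A \<inter> space ?M = {z \<in> space ?M. (cnd z \<and> Gm z \<in> Some -` A) \<or> (\<not> cnd z \<and> None \<in> A)}"
    unfolding eq by (auto split: if_splits)
  also have "\<dots> \<in> sets ?M" by measurable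
  finally show "(\<lambda>(a,b,c,d,e). dps_post n r a b c d e) -` A \<inter> space (borel \<Otimes>\<^sub>M (borel \<Otimes>\<^sub>M (borel \<Otimes>\<^sub>M (borel \<Otimes>\<^sub>M borel)))) \<in> sets (borel \<Otimes>\<^sub>M (borel \<Otimes>\<^sub>M (borel \<Otimes>\<^sub>M (borel \<Otimes>\<^sub>M borel))))"
    .
qed auto

lemma prob_gauss: "v > 0 \<Longrightarrow> prob_space (gauss v)"
  unfolding gauss_def by (rule prob_space_normal_density) simp

lemma prob_Nd: "v > 0 \<Longrightarrow> prob_space (density lborel (normal_density a (sqrt v)))"
  by (rule prob_space_normal_density) simp

lemma gauss_shift:
  assumes v: "v > 0"
  shows "distr (gauss v) lborel (\<lambda>z. a + z) = density lborel (normal_density a (sqrt v))"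
proof -
  interpret prob_space "gauss v" using v by (rule prob_gauss)
  have "distributed (gauss v) lborel (\<lambda>x. x) (normal_density 0 (sqrt v))"
    unfolding distributed_def gauss_def by (auto simp: distr_id2)
  from normal_density_affine[OF this, of 1 a] v
  have "distributed (gauss v) lborel (\<lambda>x. a + 1 * x) (normal_density (a + 1 * 0) (\<bar>1\<bar> * sqrt v))" by simp
  then show ?thesis by (simp add: distributed_def)
qed

lemma pair_shift:
  assumes sM: "sets M = sets lborel" and N: "prob_space N" and g: "g \<in> measurable N T"
  shows "distr M lborel (\<lambda>x. a + x) \<Otimes>\<^sub>M distr N T g = distr (M \<Otimes>\<^sub>M N) (lborel \<Otimes>\<^sub>M T) (\<lambda>(x,y). (a + x, g y))"
proof (rule pair_measure_distr)
  show "(\<lambda>x. a + x) \<in> measurable M lborel" using sM by (subst measurable_cong_sets[OF sM refl]) simp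
  show "g \<in> measurable N T" by fact
  interpret N: prob_space N by fact
  show "sigma_finite_measure (distr N T g)"
    using N.prob_space_distr[OF g] prob_space_imp_sigma_finite by blast
qed


abbreviation Nd :: "real \<Rightarrow> real \<Rightarrow> real measure" where
  "Nd a v \<equiv> density lborel (normal_density a (sqrt v))"

lemma mech_eq:
  assumes v: "v1 > 0" "v2 > 0" "v3 > 0" "v4 > 0" "v5 > 0"
  shows "distr (gauss v1 \<Otimes>\<^sub>M (gauss v2 \<Otimes>\<^sub>M (gauss v3 \<Otimes>\<^sub>M (gauss v4 \<Otimes>\<^sub>M gauss v5)))) out_space
           (\<lambda>(z1, z2, z3, z4, z5). dps_post n r (a1 + z1) (a2 + z2) (a3 + z3) (a4 + z4) (a5 + z5))
       = distr (Nd a1 v1 \<Otimes>\<^sub>M (Nd a2 v2 \<Otimes>\<^sub>M (Nd a3 v3 \<Otimes>\<^sub>M (Nd a4 v4 \<Otimes>\<^sub>M Nd a5 v5)))) out_space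
           (\<lambda>(z1, z2, z3, z4, z5). dps_post n r z1 z2 z3 z4 z5)"
proof -
  have sg: "\<And>v. sets (gauss v) = sets lborel" by (simp add: gauss_def)
  have pg: "\<And>v. v > 0 \<Longrightarrow> prob_space (gauss v)" by (rule prob_gauss)
  define T1 where "T1 = (\<lambda>z::real. a5 + z)"
  define T2 where "T2 = (\<lambda>(x::real, y). (a4 + x, T1 y))"
  define T3 where "T3 = (\<lambda>(x::real, y). (a3 + x, T2 y))"
  define T4 where "T4 = (\<lambda>(x::real, y). (a2 + x, T3 y))"
  define T5 where "T5 = (\<lambda>(x::real, y). (a1 + x, T4 y))"
  have m1: "T1 \<in> measurable (gauss v5) lborel" unfolding T1_def gauss_def by simp
  have m2: "T2 \<in> measurable (gauss v4 \<Otimes>\<^sub>M gauss v5) (lborel \<Otimes>\<^sub>M lborel)"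
    unfolding T2_def T1_def gauss_def by measurable
  have e2: "Nd a4 v4 \<Otimes>\<^sub>M Nd a5 v5 = distr (gauss v4 \<Otimes>\<^sub>M gauss v5) (lborel \<Otimes>\<^sub>M lborel) T2"
    unfolding gauss_shift[OF v(4), symmetric] gauss_shift[OF v(5), symmetric] T2_def T1_def
    by (rule pair_shift[OF sg pg[OF v(5)]]) (simp add: gauss_def)
  have m3: "T3 \<in> measurable (gauss v3 \<Otimes>\<^sub>M (gauss v4 \<Otimes>\<^sub>M gauss v5)) (lborel \<Otimes>\<^sub>M (lborel \<Otimes>\<^sub>M lborel))"
    unfolding T3_def T2_def T1_def gauss_def by measurable
  have m4: "T4 \<in> measurable (gauss v2 \<Otimes>\<^sub>M (gauss v3 \<Otimes>\<^sub>M (gauss v4 \<Otimes>\<^sub>M gauss v5))) (lborel \<Otimes>\<^sub>M (lborel \<Otimes>\<^sub>M (lborel \<Otimes>\<^sub>M lborel)))"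
    unfolding T4_def T3_def T2_def T1_def gauss_def by measurable
  have m5: "T5 \<in> measurable (gauss v1 \<Otimes>\<^sub>M (gauss v2 \<Otimes>\<^sub>M (gauss v3 \<Otimes>\<^sub>M (gauss v4 \<Otimes>\<^sub>M gauss v5)))) (lborel \<Otimes>\<^sub>M (lborel \<Otimes>\<^sub>M (lborel \<Otimes>\<^sub>M (lborel \<Otimes>\<^sub>M lborel))))"
    unfolding T5_def T4_def T3_def T2_def T1_def gauss_def by measurable
  have e3: "Nd a3 v3 \<Otimes>\<^sub>M (Nd a4 v4 \<Otimes>\<^sub>M Nd a5 v5) = distr (gauss v3 \<Otimes>\<^sub>M (gauss v4 \<Otimes>\<^sub>M gauss v5)) (lborel \<Otimes>\<^sub>M (lborel \<Otimes>\<^sub>M lborel)) T3"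
    unfolding e2 gauss_shift[OF v(3), symmetric] T3_def
    by (rule pair_shift[OF sg prob_space_pair[OF pg[OF v(4)] pg[OF v(5)]] m2])
  have e4: "Nd a2 v2 \<Otimes>\<^sub>M (Nd a3 v3 \<Otimes>\<^sub>M (Nd a4 v4 \<Otimes>\<^sub>M Nd a5 v5)) = distr (gauss v2 \<Otimes>\<^sub>M (gauss v3 \<Otimes>\<^sub>M (gauss v4 \<Otimes>\<^sub>M gauss v5))) (lborel \<Otimes>\<^sub>M (lborel \<Otimes>\<^sub>M (lborel \<Otimes>\<^sub>M lborel))) T4"
    unfolding e3 gauss_shift[OF v(2), symmetric] T4_def
    by (rule pair_shift[OF sg prob_space_pair[OF pg[OF v(3)] prob_space_pair[OF pg[OF v(4)] pg[OF v(5)]]] m3])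
  have e5: "Nd a1 v1 \<Otimes>\<^sub>M (Nd a2 v2 \<Otimes>\<^sub>M (Nd a3 v3 \<Otimes>\<^sub>M (Nd a4 v4 \<Otimes>\<^sub>M Nd a5 v5))) = distr (gauss v1 \<Otimes>\<^sub>M (gauss v2 \<Otimes>\<^sub>M (gauss v3 \<Otimes>\<^sub>M (gauss v4 \<Otimes>\<^sub>M gauss v5)))) (lborel \<Otimes>\<^sub>M (lborel \<Otimes>\<^sub>M (lborel \<Otimes>\<^sub>M (lborel \<Otimes>\<^sub>M lborel)))) T5"
    unfolding e4 gauss_shift[OF v(1), symmetric] T5_def
    by (rule pair_shift[OF sg prob_space_pair[OF pg[OF v(2)] prob_space_pair[OF pg[OF v(3)] prob_space_pair[OF pg[OF v(4)] pg[OF v(5)]]]] m4])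
  have sL: "sets (lborel \<Otimes>\<^sub>M (lborel \<Otimes>\<^sub>M (lborel \<Otimes>\<^sub>M (lborel \<Otimes>\<^sub>M lborel)))) = sets (borel \<Otimes>\<^sub>M (borel \<Otimes>\<^sub>M (borel \<Otimes>\<^sub>M (borel \<Otimes>\<^sub>M (borel::real measure)))))"
    by (intro sets_pair_measure_cong) auto
  have pm: "(\<lambda>(z1, z2, z3, z4, z5). dps_post n r z1 z2 z3 z4 z5) \<in> measurable (lborel \<Otimes>\<^sub>M (lborel \<Otimes>\<^sub>M (lborel \<Otimes>\<^sub>M (lborel \<Otimes>\<^sub>M lborel)))) out_space"
    by (subst measurable_cong_sets[OF sL refl]) (rule post_meas)
  show ?thesis
    unfolding e5 distr_distr[OF pm m5]
    by (intro arg_cong[where f="distr _ _"]) (auto simp: fun_eq_iff T5_def T4_def T3_def T2_def T1_def)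
qed


lemma main_bound:
  assumes v: "v1 > 0" "v2 > 0" "v3 > 0" "v4 > 0" "v5 > 0" and a: "\<alpha> > 1"
  shows "renyi_div \<alpha>
     (distr (gauss v1 \<Otimes>\<^sub>M (gauss v2 \<Otimes>\<^sub>M (gauss v3 \<Otimes>\<^sub>M (gauss v4 \<Otimes>\<^sub>M gauss v5)))) out_space
           (\<lambda>(z1, z2, z3, z4, z5). dps_post n r (a1 + z1) (a2 + z2) (a3 + z3) (a4 + z4) (a5 + z5)))
     (distr (gauss v1 \<Otimes>\<^sub>M (gauss v2 \<Otimes>\<^sub>M (gauss v3 \<Otimes>\<^sub>M (gauss v4 \<Otimes>\<^sub>M gauss v5)))) out_space
           (\<lambda>(z1, z2, z3, z4, z5). dps_post n r (b1 + z1) (b2 + z2) (b3 + z3) (b4 + z4) (b5 + z5)))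
   \<le> ereal (\<alpha> * ((a1 - b1)\<^sup>2 / (2 * v1) + (a2 - b2)\<^sup>2 / (2 * v2) + (a3 - b3)\<^sup>2 / (2 * v3)
                 + (a4 - b4)\<^sup>2 / (2 * v4) + (a5 - b5)\<^sup>2 / (2 * v5)))"
proof -
  define c where "c a b v = \<alpha> * (\<alpha> - 1) * (a - b)\<^sup>2 / (2 * v)" for a b v :: real
  note G = gR_pair[OF gR_gauss[OF v(1) a, of a1 b1] gR_pair[OF gR_gauss[OF v(2) a, of a2 b2]
      gR_pair[OF gR_gauss[OF v(3) a, of a3 b3] gR_pair[OF gR_gauss[OF v(4) a, of a4 b4] gR_gauss[OF v(5) a, of a5 b5]]]]]
  have K: "ennreal (exp (c a1 b1 v1)) * (ennreal (exp (c a2 b2 v2)) * (ennreal (exp (c a3 b3 v3)) * (ennreal (exp (c a4 b4 v4)) * ennreal (exp (c a5 b5 v5)))))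
     = ennreal (exp (c a1 b1 v1 + c a2 b2 v2 + c a3 b3 v3 + c a4 b4 v4 + c a5 b5 v5))"
    by (simp add: exp_add ennreal_mult mult.assoc)
  have sL: "sets (Nd b1 v1 \<Otimes>\<^sub>M (Nd b2 v2 \<Otimes>\<^sub>M (Nd b3 v3 \<Otimes>\<^sub>M (Nd b4 v4 \<Otimes>\<^sub>M Nd b5 v5)))) = sets (borel \<Otimes>\<^sub>M (borel \<Otimes>\<^sub>M (borel \<Otimes>\<^sub>M (borel \<Otimes>\<^sub>M (borel::real measure)))))"
    by (intro sets_pair_measure_cong) auto
  have pm: "(\<lambda>(z1, z2, z3, z4, z5). dps_post n r z1 z2 z3 z4 z5) \<in> measurable (Nd b1 v1 \<Otimes>\<^sub>M (Nd b2 v2 \<Otimes>\<^sub>M (Nd b3 v3 \<Otimes>\<^sub>M (Nd b4 v4 \<Otimes>\<^sub>M Nd b5 v5)))) out_space"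
    by (subst measurable_cong_sets[OF sL refl]) (rule post_meas)
  note D = dpi[OF G[unfolded K[unfolded c_def]] a pm]
  have eq: "(c a1 b1 v1 + c a2 b2 v2 + c a3 b3 v3 + c a4 b4 v4 + c a5 b5 v5) / (\<alpha> - 1)
     = \<alpha> * ((a1 - b1)\<^sup>2 / (2 * v1) + (a2 - b2)\<^sup>2 / (2 * v2) + (a3 - b3)\<^sup>2 / (2 * v3)
                 + (a4 - b4)\<^sup>2 / (2 * v4) + (a5 - b5)\<^sup>2 / (2 * v5))"
    using a by (simp add: c_def field_simps)
  show ?thesis
    unfolding mech_eq[OF v] using D eq[unfolded c_def] by simp
qed


lemma sens:
  assumes nb: "neighbouring n D D'" and lo: "\<And>x. lo \<le> f x" and hi: "\<And>x. f x \<le> hi" and n: "n > 0"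
  shows "((\<Sum>i<n. f (D ! i)) / real n - (\<Sum>i<n. f (D' ! i)) / real n)\<^sup>2 \<le> ((hi - lo) / real n)\<^sup>2"
proof -
  from nb have "card {i. i < n \<and> D ! i \<noteq> D' ! i} = 1" by (simp add: neighbouring_def)
  then obtain i0 where S: "{i. i < n \<and> D ! i \<noteq> D' ! i} = {i0}" by (rule card_1_singletonE)
  then have i0: "i0 < n" by auto
  have same: "\<And>i. i \<in> {..<n} - {i0} \<Longrightarrow> D ! i = D' ! i" using S by auto
  have "(\<Sum>i<n. f (D ! i)) - (\<Sum>i<n. f (D' ! i)) = (\<Sum>i<n. f (D ! i) - f (D' ! i))"
    by (simp add: sum_subtractf)
  also have "\<dots> = (f (D ! i0) - f (D' ! i0)) + (\<Sum>i\<in>{..<n} - {i0}. f (D ! i) - f (D' ! i))"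
    using i0 by (subst sum.remove[of _ i0]) auto
  also have "(\<Sum>i\<in>{..<n} - {i0}. f (D ! i) - f (D' ! i)) = 0"
    by (rule sum.neutral) (use same in auto)
  finally have d: "(\<Sum>i<n. f (D ! i)) - (\<Sum>i<n. f (D' ! i)) = f (D ! i0) - f (D' ! i0)" by simp
  have "\<bar>f (D ! i0) - f (D' ! i0)\<bar> \<le> hi - lo" using lo hi by (auto simp: abs_le_iff intro: diff_mono)
  then have "\<bar>((\<Sum>i<n. f (D ! i)) / real n - (\<Sum>i<n. f (D' ! i)) / real n)\<bar> \<le> (hi - lo) / real n"
    using n by (simp add: diff_divide_distrib[symmetric] d divide_right_mono)
  moreover have "0 \<le> hi - lo" using lo[of undefined] hi[of undefined] by simp
  ultimately show ?thesis
    by (metis abs_ge_zero abs_of_nonneg divide_nonneg_nonneg of_nat_0_le_iff order_trans power_mono abs_le_square_iff)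
qed

lemma term_bound:
  fixes d W v \<rho>' :: real
  assumes "d\<^sup>2 \<le> (W / real n)\<^sup>2" "v = W\<^sup>2 / (2 * \<rho>' * (real n)\<^sup>2)" "W > 0" "n > 0" "\<rho>' > 0"
  shows "d\<^sup>2 / (2 * v) \<le> \<rho>'"
proof -
  have vp: "v > 0" using assms by simp
  have "d\<^sup>2 / (2 * v) \<le> (W / real n)\<^sup>2 / (2 * v)" using assms vp by (intro divide_right_mono) auto
  also have "\<dots> = \<rho>'" unfolding assms(2) using assms(3-5) by (simp add: field_simps power2_eq_square)
  finally show ?thesis .
qed


theorem lemma4p1:
  fixes n r q :: nat and \<rho> \<Delta> :: real
  assumes "n \<ge> 2" and "0 < r" and "r < n" and "0 < q"
    and "\<rho> > 0" and "\<Delta> > 0"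
  shows "zCDP n \<rho> (dpstats_L n r q \<rho> \<Delta>)"
  unfolding zCDP_def
proof (intro allI impI)
  fix D D' :: "(real \<times> real) list" and \<alpha> :: real
  assume nb: "neighbouring n D D'" and a: "\<alpha> > 1"
  have n: "n > 0" using assms by simp
  have rp: "\<rho> / 5 > 0" and Dp: "\<Delta> > 0" using assms by auto
  define f1 where "f1 = (\<lambda>p::real\<times>real. clip (-\<Delta>) \<Delta> (fst p))"
  define f2 where "f2 = (\<lambda>p::real\<times>real. clip (-\<Delta>) \<Delta> (snd p))"
  define f3 where "f3 = (\<lambda>p::real\<times>real. clip 0 (\<Delta>\<^sup>2) ((fst p)\<^sup>2))"
  define f4 where "f4 = (\<lambda>p::real\<times>real. clip (-(\<Delta>\<^sup>2)) (\<Delta>\<^sup>2) (fst p * snd p))"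
  define f5 where "f5 = (\<lambda>p::real\<times>real. clip 0 (\<Delta>\<^sup>2) ((snd p)\<^sup>2))"
  define S where "S f E = (\<Sum>i<n. f (E ! i)) / real n" for f :: "real \<times> real \<Rightarrow> real" and E :: "(real \<times> real) list"
  define v1 where "v1 = 2 * \<Delta>\<^sup>2 / (\<rho> / 5 * (real n)\<^sup>2)"
  define v3 where "v3 = \<Delta>^4 / (2 * (\<rho> / 5) * (real n)\<^sup>2)"
  define v4 where "v4 = 2 * \<Delta>^4 / (\<rho> / 5 * (real n)\<^sup>2)"
  have vp: "v1 > 0" "v3 > 0" "v4 > 0" using rp Dp n by (auto simp: v1_def v3_def v4_def)
  have eqM: "dpstats_L n r q \<rho> \<Delta> E = distr (gauss v1 \<Otimes>\<^sub>M (gauss v1 \<Otimes>\<^sub>M (gauss v3 \<Otimes>\<^sub>M (gauss v4 \<Otimes>\<^sub>M gauss v3)))) out_space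
           (\<lambda>(z1, z2, z3, z4, z5). dps_post n r (S f1 E + z1) (S f2 E + z2) (S f3 E + z3) (S f4 E + z4) (S f5 E + z5))" for E
    unfolding dpstats_L_def Let_def S_def f1_def f2_def f3_def f4_def f5_def v1_def v3_def v4_def by simp
  have clip_lo: "a \<le> b \<Longrightarrow> a \<le> clip a b z" and clip_hi: "a \<le> b \<Longrightarrow> clip a b z \<le> b" for a b z :: real
    by (auto simp: clip_def)
  have Dsq: "-(\<Delta>\<^sup>2) \<le> \<Delta>\<^sup>2" "0 \<le> \<Delta>\<^sup>2" "-\<Delta> \<le> \<Delta>" using Dp by auto
  have p4: "\<Delta>^4 = \<Delta> * (\<Delta> * (\<Delta> * \<Delta>))" by (simp add: eval_nat_numeral)
  have s1: "(S f1 D - S f1 D')\<^sup>2 \<le> ((\<Delta> - (-\<Delta>)) / real n)\<^sup>2"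
    unfolding S_def by (rule sens[OF nb _ _ n]) (auto simp: f1_def intro: clip_lo clip_hi Dsq)
  have s2: "(S f2 D - S f2 D')\<^sup>2 \<le> ((\<Delta> - (-\<Delta>)) / real n)\<^sup>2"
    unfolding S_def by (rule sens[OF nb _ _ n]) (auto simp: f2_def intro: clip_lo clip_hi Dsq)
  have s3: "(S f3 D - S f3 D')\<^sup>2 \<le> ((\<Delta>\<^sup>2 - 0) / real n)\<^sup>2"
    unfolding S_def by (rule sens[OF nb _ _ n]) (auto simp: f3_def intro: clip_lo clip_hi Dsq)
  have s4: "(S f4 D - S f4 D')\<^sup>2 \<le> ((\<Delta>\<^sup>2 - (-(\<Delta>\<^sup>2))) / real n)\<^sup>2"
    unfolding S_def by (rule sens[OF nb _ _ n]) (auto simp: f4_def intro: clip_lo clip_hi Dsq)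
  have s5: "(S f5 D - S f5 D')\<^sup>2 \<le> ((\<Delta>\<^sup>2 - 0) / real n)\<^sup>2"
    unfolding S_def by (rule sens[OF nb _ _ n]) (auto simp: f5_def intro: clip_lo clip_hi Dsq)
  have t1: "(S f1 D - S f1 D')\<^sup>2 / (2 * v1) \<le> \<rho> / 5"
    by (rule term_bound[OF s1 _ _ n rp]) (use Dp rp in \<open>auto simp: v1_def field_simps power2_eq_square\<close>)
  have t2: "(S f2 D - S f2 D')\<^sup>2 / (2 * v1) \<le> \<rho> / 5"
    by (rule term_bound[OF s2 _ _ n rp]) (use Dp rp in \<open>auto simp: v1_def field_simps power2_eq_square\<close>)
  have t3: "(S f3 D - S f3 D')\<^sup>2 / (2 * v3) \<le> \<rho> / 5"
    by (rule term_bound[OF s3 _ _ n rp]) (use Dp rp in \<open>auto simp: v3_def p4 field_simps power2_eq_square\<close>)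
  have t4: "(S f4 D - S f4 D')\<^sup>2 / (2 * v4) \<le> \<rho> / 5"
    by (rule term_bound[OF s4 _ _ n rp]) (use Dp rp in \<open>auto simp: v4_def p4 field_simps power2_eq_square\<close>)
  have t5: "(S f5 D - S f5 D')\<^sup>2 / (2 * v3) \<le> \<rho> / 5"
    by (rule term_bound[OF s5 _ _ n rp]) (use Dp rp in \<open>auto simp: v3_def p4 field_simps power2_eq_square\<close>)
  have "\<alpha> * ((S f1 D - S f1 D')\<^sup>2 / (2 * v1) + (S f2 D - S f2 D')\<^sup>2 / (2 * v1) + (S f3 D - S f3 D')\<^sup>2 / (2 * v3)
                 + (S f4 D - S f4 D')\<^sup>2 / (2 * v4) + (S f5 D - S f5 D')\<^sup>2 / (2 * v3)) \<le> \<alpha> * \<rho>"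
    using t1 t2 t3 t4 t5 a by (intro mult_left_mono) auto
  then show "renyi_div \<alpha> (dpstats_L n r q \<rho> \<Delta> D) (dpstats_L n r q \<rho> \<Delta> D') \<le> ereal (\<rho> * \<alpha>)"
    unfolding eqM by (intro order_trans[OF main_bound[OF vp(1) vp(1) vp(2) vp(3) vp(2) a]]) (simp add: mult.commute)
qed

end
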